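(* Let $p$ be a prime with $p\notin\{2,3,7,43\}$, and let $n$ be a positive integer divisible by $p$. Then $n\in\mathcal{M}_p^{(1)}$ if and only if $n/p\in\mathcal{W}$, $\mathfrak{n}_{n/p}\mid p$, and $\mathfrak{n}_{n/p}-1\nmid n/p$.
   Context: For positive integers $k,n$ let $S_k(n)=\sum_{i=1}^{n} i^k$. For an integer $a$, $\mathcal{M}_a$ denotes the set of positive integers $n$ such that $S_n(n)\equiv a\pmod{n}$. For a prime $p$, $\mathcal{M}_p^{(1)}=\{n\in\mathcal{M}_p : p\mid n,\ p^2\nmid n\}$. A positive integer $n$ is a weak primary pseudoperfect number if $\sum_{q\mid n,\ q\text{ prime}} \frac{n}{q}+1\equiv 0\pmod{n}$; $\mathcal{W}$ denotes the set of such numbers. For a positive integer $Q$, $\mathfrak{n}_Q=\operatorname{lcm}\{(q-1)/\gcd(q-1,Q) : q\text{ prime},\ q\mid Q\}$ if $Q\neq 1$, and $\mathfrak{n}_1=1$. *)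

theory Defs
  imports "HOL-Number_Theory.Number_Theory"
begin

definition S :: "nat \<Rightarrow> nat \<Rightarrow> nat" where
  "S k n = (\<Sum>i=1..n. i ^ k)"

definition M :: "int \<Rightarrow> nat set" where
  "M a = {n. n > 0 \<and> [int (S n n) = a] (mod int n)}"

definition M1 :: "nat \<Rightarrow> nat set" where
  "M1 p = {n \<in> M (int p). p dvd n \<and> \<not> p^2 dvd n}"

definition W :: "nat set" where
  "W = {n. n > 0 \<and> [(\<Sum>q\<in>prime_factors n. n div q) + 1 = 0] (mod n)}"

definition frakn :: "nat \<Rightarrow> nat" where
  "frakn Q = (if Q = 1 then 1
     else Lcm ((\<lambda>q. (q - 1) div gcd (q - 1) Q) ` prime_factors Q))"

end

theory Submission
  imports Defs
begin


lemma S_block: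
  fixes q k :: nat
  shows "[S k (q*t) = t * S k q] (mod q)"
proof (induction t)
  case 0 then show ?case by (simp add: S_def)
next
  case (Suc t)
  have split: "S k (q*Suc t) = S k (q*t) + (\<Sum>i=1..q. (i + q*t)^k)"
  proof -
    have "S k (q*Suc t) = (\<Sum>i=1..q*t + q. i^k)" by (simp add: S_def add.commute)
    also have "\<dots> = S k (q*t) + (\<Sum>i=q*t+1..q*t + q. i^k)"
      unfolding S_def by (rule sum.ub_add_nat) simp
    also have "(\<Sum>i=q*t+1..q*t + q. i^k) = (\<Sum>i=1..q. (i + q*t)^k)"
      using sum.shift_bounds_cl_nat_ivl[of "\<lambda>i. i^k" 1 "q*t" q] by (simp add: add.commute)
    finally show ?thesis .
  qed
  have "[(\<Sum>i=1..q. (i + q*t)^k) = (\<Sum>i=1..q. i^k)] (mod q)"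
    by (rule cong_sum, rule cong_pow) (simp add: cong_def)
  hence "[(\<Sum>i=1..q. (i + q*t)^k) = S k q] (mod q)" by (simp add: S_def)
  from cong_add[OF Suc.IH this] have "[S k (q*t) + (\<Sum>i=1..q. (i + q*t)^k) = Suc t * S k q] (mod q)"
    by (simp add: add.commute)
  thus ?case by (simp only: split)
qed

lemma S_mod_prime_mult:
  fixes q k m :: nat
  assumes "q dvd m"
  shows "[S k m = (m div q) * S k q] (mod q)"
  using S_block[of k q "m div q"] assms by simp

lemma S_split:
  assumes "q > 0"
  shows "S k q = (\<Sum>i=1..q-1. i^k) + q^k"
proof -
  obtain m where "q = Suc m" using assms by (cases q) auto
  thus ?thesis by (simp add: S_def)
qed

lemma T_fermat:
  fixes q k :: nat
  assumes "prime q" "(q-1) dvd k"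
  shows "[(\<Sum>i=1..q-1. i^k) = q - 1] (mod q)"
proof -
  obtain c where c: "k = (q-1)*c" using assms(2) by blast
  have "[(\<Sum>i=1..q-1. i^k) = (\<Sum>i=1..q-1. 1)] (mod q)"
  proof (rule cong_sum)
    fix i assume i: "i \<in> {1..q-1}"
    hence "\<not> q dvd i" using nat_dvd_not_less by force
    hence "[i^(q-1) = 1] (mod q)" using fermat_theorem assms(1) by blast
    hence "[(i^(q-1))^c = 1^c] (mod q)" by (rule cong_pow)
    thus "[i^k = 1] (mod q)" by (simp add: c power_mult)
  qed
  thus ?thesis by simp
qed

lemma T_zero:
  fixes q k :: nat
  assumes q: "prime q" and nd: "\<not> (q-1) dvd k"
  shows "q dvd (\<Sum>i=1..q-1. i^k)"
proof -
  obtain a where a: "a \<in> totatives q" "ord q a = q - 1" using residue_prime_has_primroot[OF q] by blast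
  have cop: "coprime a q" using a(1) by (simp add: totatives_def coprime_commute)
  have nq: "\<not> q dvd a" using cop q
    by (metis coprime_absorb_right coprime_commute not_prime_unit)
  have ak: "\<not> [a^k = 1] (mod q)" using ord_divides[of a k q] a(2) nd by simp
  define f where "f = (\<lambda>i. a*i mod q)"
  let ?A = "{1..q-1}"
  have q1: "q > 1" using q prime_gt_1_nat by blast
  have inA: "f i \<in> ?A" if "i \<in> ?A" for i
  proof -
    have "\<not> q dvd i" using that nat_dvd_not_less by force
    hence "\<not> q dvd a*i" using q nq prime_dvd_mult_iff by blast
    hence "f i \<noteq> 0" by (simp add: f_def dvd_eq_mod_eq_0)
    moreover have "f i < q" using q1 by (simp add: f_def)
    ultimately show ?thesis by auto
  qed
  have inj: "inj_on f ?A"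
  proof
    fix i j assume ij: "i \<in> ?A" "j \<in> ?A" "f i = f j"
    hence "[a*i = a*j] (mod q)" by (simp add: f_def cong_def)
    hence "[i = j] (mod q)" using cong_mult_lcancel_nat cop by blast
    thus "i = j" using cong_less_modulus_unique_nat ij(1,2) q1 by fastforce
  qed
  have sub: "f ` ?A \<subseteq> ?A" using inA by blast
  have img: "f ` ?A = ?A" using endo_inj_surj[OF _ sub inj] by simp
  have "(\<Sum>i\<in>?A. i^k) = (\<Sum>i\<in>f ` ?A. i^k)" by (simp only: img)
  also have "\<dots> = (\<Sum>i\<in>?A. (f i)^k)" by (rule sum.reindex[OF inj, unfolded comp_def])
  finally have e: "(\<Sum>i\<in>?A. i^k) = (\<Sum>i\<in>?A. (f i)^k)" .
  have "[(\<Sum>i\<in>?A. (f i)^k) = (\<Sum>i\<in>?A. (a*i)^k)] (mod q)"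
    by (rule cong_sum, rule cong_pow) (simp add: f_def cong_def)
  hence "[(\<Sum>i\<in>?A. i^k) = (\<Sum>i\<in>?A. (a*i)^k)] (mod q)" by (simp only: e[symmetric])
  hence c1: "[(\<Sum>i\<in>?A. i^k) = a^k * (\<Sum>i\<in>?A. i^k)] (mod q)"
    by (simp add: power_mult_distrib sum_distrib_left)
  define T where "T = (\<Sum>i\<in>?A. i^k)"
  have "[int T * 1 = int T * int (a^k)] (mod int q)" using c1 unfolding T_def
    by (metis cong_int_iff mult.commute mult.right_neutral of_nat_mult)
  hence "int q dvd int T * (int (a^k) - 1)"
    by (metis cong_iff_dvd_diff cong_sym right_diff_distrib')
  moreover have "\<not> int q dvd (int (a^k) - 1)"
    using ak by (metis cong_iff_dvd_diff cong_int_iff of_nat_1)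
  moreover have "prime (int q)" using q by simp
  ultimately have "int q dvd int T" using prime_dvd_mult_iff by blast
  hence "q dvd T" by (simp only: of_nat_dvd_iff)
  thus ?thesis unfolding T_def .
qed

lemma S_prime_cong:
  fixes q k :: nat
  assumes q: "prime q" and k: "k > 0"
  shows "[S k q = (if (q-1) dvd k then q - 1 else 0)] (mod q)"
proof -
  have q0: "q > 0" using q prime_gt_0_nat by blast
  have qk: "[q^k = 0] (mod q)" using k by (simp add: cong_0_iff)
  show ?thesis
  proof (cases "(q-1) dvd k")
    case True
    from cong_add[OF T_fermat[OF q True] qk] show ?thesis using True by (simp add: S_split[OF q0])
  next
    case False
    hence "[(\<Sum>i=1..q-1. i^k) = 0] (mod q)" using T_zero[OF q False] cong_0_iff by blast
    from cong_add[OF this qk] show ?thesis using False by (simp add: S_split[OF q0])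
  qed
qed



lemma notprime_mult: "1 < a \<Longrightarrow> 1 < b \<Longrightarrow> \<not> prime (a*b::nat)"
  using prime_product[of a b] by auto

lemma np': "x = a*b \<Longrightarrow> 1 < a \<Longrightarrow> 1 < b \<Longrightarrow> \<not> prime (x::nat)"
  using notprime_mult by blast

lemma dvd43: "(d::nat) dvd 43 \<Longrightarrow> d = 1 \<or> d = 43"
proof -
  have "prime (43::nat)" by code_simp
  thus "d dvd 43 \<Longrightarrow> d = 1 \<or> d = 43" unfolding prime_nat_iff by blast
qed

lemma dvd7: "(d::nat) dvd 7 \<Longrightarrow> d = 1 \<or> d = 7"
proof -
  have "prime (7::nat)" by code_simp
  thus "d dvd 7 \<Longrightarrow> d = 1 \<or> d = 7" unfolding prime_nat_iff by blast
qed

lemma dvd3: "(d::nat) dvd 3 \<Longrightarrow> d = 1 \<or> d = 3"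
proof -
  have "prime (3::nat)" by code_simp
  thus "d dvd 3 \<Longrightarrow> d = 1 \<or> d = 3" unfolding prime_nat_iff by blast
qed

lemma dvd2: "(d::nat) dvd 2 \<Longrightarrow> d = 1 \<or> d = 2"
proof -
  have "prime (2::nat)" by code_simp
  thus "d dvd 2 \<Longrightarrow> d = 1 \<or> d = 2" unfolding prime_nat_iff by blast
qed

lemma prime_1806:
  fixes r :: nat
  assumes "prime r" "(r - 1) dvd 1806"
  shows "r \<in> {2,3,7,43}"
proof -
  have r1: "r \<ge> 1" using assms(1) prime_gt_0_nat by (simp add: Suc_leI)
  have "(r-1) dvd 2 * (3 * (7 * 43))" using assms(2) by simp
  then obtain a m1 where am: "r - 1 = a*m1" "a dvd 2" "m1 dvd 3*(7*43)" using division_decomp by blast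
  then obtain b m2 where bm: "m1 = b*m2" "b dvd 3" "m2 dvd 7*43" using division_decomp by blast
  then obtain c d where cd: "m2 = c*d" "c dvd 7" "d dvd 43" using division_decomp by blast
  have r: "r = a*b*c*d + 1" using am bm cd r1 by simp
  have np0: "\<not> prime (4::nat)" by (rule np'[of _ 2 2]) simp_all
  have np1: "\<not> prime (8::nat)" by (rule np'[of _ 2 4]) simp_all
  have np2: "\<not> prime (15::nat)" by (rule np'[of _ 3 5]) simp_all
  have np3: "\<not> prime (22::nat)" by (rule np'[of _ 2 11]) simp_all
  have np4: "\<not> prime (44::nat)" by (rule np'[of _ 4 11]) simp_all
  have np5: "\<not> prime (87::nat)" by (rule np'[of _ 3 29]) simp_all
  have np6: "\<not> prime (130::nat)" by (rule np'[of _ 2 65]) simp_all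
  have np7: "\<not> prime (259::nat)" by (rule np'[of _ 7 37]) simp_all
  have np8: "\<not> prime (302::nat)" by (rule np'[of _ 2 151]) simp_all
  have np9: "\<not> prime (603::nat)" by (rule np'[of _ 3 201]) simp_all
  have np10: "\<not> prime (904::nat)" by (rule np'[of _ 2 452]) simp_all
  have np11: "\<not> prime (1807::nat)" by (rule np'[of _ 13 139]) simp_all
  note np = np0 np1 np2 np3 np4 np5 np6 np7 np8 np9 np10 np11
  from dvd2[OF am(2)] dvd3[OF bm(2)] dvd7[OF cd(2)] dvd43[OF cd(3)]
  have mem: "r \<in> {2,3,4,7,8,15,22,43,44,87,130,259,302,603,904,1807}"
    unfolding r by (elim disjE) simp_all
  have ne0: "r \<noteq> 4" using np0 assms(1) by metis
  have ne1: "r \<noteq> 8" using np1 assms(1) by metis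
  have ne2: "r \<noteq> 15" using np2 assms(1) by metis
  have ne3: "r \<noteq> 22" using np3 assms(1) by metis
  have ne4: "r \<noteq> 44" using np4 assms(1) by metis
  have ne5: "r \<noteq> 87" using np5 assms(1) by metis
  have ne6: "r \<noteq> 130" using np6 assms(1) by metis
  have ne7: "r \<noteq> 259" using np7 assms(1) by metis
  have ne8: "r \<noteq> 302" using np8 assms(1) by metis
  have ne9: "r \<noteq> 603" using np9 assms(1) by metis
  have ne10: "r \<noteq> 904" using np10 assms(1) by metis
  have ne11: "r \<noteq> 1807" using np11 assms(1) by metis
  show ?thesis using mem ne0 ne1 ne2 ne3 ne4 ne5 ne6 ne7 ne8 ne9 ne10 ne11 by (simp only: insert_iff empty_iff) simp
qed



definition sqf :: "nat \<Rightarrow> bool" where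
  "sqf n \<longleftrightarrow> (\<forall>q. prime q \<longrightarrow> \<not> q^2 dvd n)"

lemma sqf_dvd: "sqf n \<Longrightarrow> m dvd n \<Longrightarrow> sqf m"
  unfolding sqf_def using dvd_trans by blast

lemma sqf_int_dvd:
  fixes y :: int
  shows "n > 0 \<Longrightarrow> sqf n \<Longrightarrow> (\<And>q. prime q \<Longrightarrow> q dvd n \<Longrightarrow> int q dvd y) \<Longrightarrow> int n dvd y"
proof (induction n rule: less_induct)
  case (less n)
  show ?case
  proof (cases "n = 1")
    case True then show ?thesis by simp
  next
    case False
    then obtain q where q: "prime q" "q dvd n" using prime_factor_nat by blast
    then obtain m where m: "n = q*m" by blast
    have m0: "m > 0" using less.prems(1) m by (cases m) auto
    have nqm: "\<not> q dvd m"
    proof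
      assume "q dvd m"
      hence "q^2 dvd n" using m by (simp add: power2_eq_square)
      thus False using less.prems(2) q(1) unfolding sqf_def by blast
    qed
    have q1: "q > 1" using q(1) prime_gt_1_nat by blast
    have mn: "m < n" using m m0 q1 by simp
    have "int m dvd y"
      using less.IH[OF mn m0 sqf_dvd[OF less.prems(2)]] less.prems(3) m by (simp add: dvd_mult_right)
    moreover have "int q dvd y" using less.prems(3) q by blast
    moreover have "coprime (int q) (int m)" using q(1) nqm prime_imp_coprime by auto
    ultimately show ?thesis using m divides_mult by (metis of_nat_mult)
  qed
qed

lemma sqf_nat_dvd:
  fixes y :: nat
  shows "n > 0 \<Longrightarrow> sqf n \<Longrightarrow> (\<And>q. prime q \<Longrightarrow> q dvd n \<Longrightarrow> q dvd y) \<Longrightarrow> n dvd y"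
proof -
  assume a: "n > 0" "sqf n" "\<And>q. prime q \<Longrightarrow> q dvd n \<Longrightarrow> q dvd y"
  have "int n dvd int y" by (rule sqf_int_dvd[OF a(1,2)]) (simp add: a(3))
  thus ?thesis by (simp only: of_nat_dvd_iff)
qed

lemma div_gcd_dvd_iff:
  fixes a b c :: nat
  assumes "c > 0"
  shows "(a div gcd a c) dvd b \<longleftrightarrow> a dvd b * c"
proof -
  define g where "g = gcd a c"
  have g0: "g > 0" using assms by (simp add: g_def)
  obtain a' where a': "a = g*a'" unfolding g_def by (metis dvd_def gcd_dvd1)
  obtain c' where c': "c = g*c'" unfolding g_def by (metis dvd_def gcd_dvd2)
  have cop0: "coprime (a div g) (c div g)"
    using div_gcd_coprime[of a c] assms unfolding g_def by simp
  have ag: "a div g = a'" using a' g0 by simp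
  have cg: "c div g = c'" using c' g0 by simp
  have cop: "coprime a' c'" using cop0 ag cg by simp
  have "a div g = a'" using ag .
  moreover have "a dvd b*c \<longleftrightarrow> a' dvd b*c'" using a' c' g0 by (simp add: mult.left_commute)
  moreover have "a' dvd b*c' \<longleftrightarrow> a' dvd b" using cop by (simp add: coprime_dvd_mult_left_iff)
  ultimately show ?thesis by (simp add: g_def)
qed

lemma rest_dvd:
  fixes Q q :: nat
  assumes "Q > 0" "prime q" "q dvd Q"
  shows "q dvd (\<Sum>r\<in>prime_factors Q - {q}. Q div r)"
proof (rule dvd_sum)
  fix r assume r: "r \<in> prime_factors Q - {q}"
  hence rp: "prime r" "r dvd Q" "r \<noteq> q" by auto
  have "coprime q r" using rp assms(2) by (simp add: primes_coprime)
  hence "q*r dvd Q" using rp assms(3) divides_mult by blast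
  then obtain c where "Q = q*r*c" by blast
  hence "Q div r = q*c" using rp(1) prime_gt_0_nat by simp
  thus "q dvd Q div r" by simp
qed

lemma W_char:
  fixes Q :: nat
  assumes Q0: "Q > 0"
  shows "Q \<in> W \<longleftrightarrow> sqf Q \<and> (\<forall>q. prime q \<longrightarrow> q dvd Q \<longrightarrow> q dvd Q div q + 1)"
proof -
  define \<Sigma> where "\<Sigma> = (\<Sum>r\<in>prime_factors Q. Q div r)"
  have split: "\<Sigma> + 1 = (Q div q + 1) + (\<Sum>r\<in>prime_factors Q - {q}. Q div r)"
    if "prime q" "q dvd Q" for q
  proof -
    have "q \<in> prime_factors Q" using that Q0 by (simp add: in_prime_factors_iff)
    thus ?thesis unfolding \<Sigma>_def by (simp add: sum.remove)
  qed
  have Wd: "Q \<in> W \<longleftrightarrow> Q dvd \<Sigma> + 1" using Q0 by (simp add: W_def \<Sigma>_def cong_0_iff)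
  have each: "q dvd \<Sigma> + 1 \<longleftrightarrow> q dvd Q div q + 1" if "prime q" "q dvd Q" for q
    unfolding split[OF that] by (rule dvd_add_left_iff[OF rest_dvd[OF Q0 that]])
  show ?thesis
  proof
    assume "Q \<in> W"
    hence d: "Q dvd \<Sigma> + 1" using Wd by simp
    have e: "\<forall>q. prime q \<longrightarrow> q dvd Q \<longrightarrow> q dvd Q div q + 1"
      using d each dvd_trans by blast
    have "sqf Q" unfolding sqf_def
    proof (intro allI impI notI)
      fix q assume q: "prime q" "q^2 dvd Q"
      hence qQ: "q dvd Q" by (meson dvd_power dvd_trans prime_gt_0_nat zero_less_numeral)
      from q obtain c where "Q = q^2*c" by blast
      hence "Q div q = q*c" using q(1) prime_gt_0_nat by (simp add: power2_eq_square)
      hence "q dvd Q div q" by simp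
      moreover have "q dvd Q div q + 1" using e q(1) qQ by blast
      ultimately have "q dvd 1" by (metis dvd_add_right_iff)
      thus False using q(1) using not_prime_unit by blast
    qed
    thus "sqf Q \<and> (\<forall>q. prime q \<longrightarrow> q dvd Q \<longrightarrow> q dvd Q div q + 1)" using e by blast
  next
    assume a: "sqf Q \<and> (\<forall>q. prime q \<longrightarrow> q dvd Q \<longrightarrow> q dvd Q div q + 1)"
    have "Q dvd \<Sigma> + 1" using sqf_nat_dvd[OF Q0] a each by blast
    thus "Q \<in> W" using Wd by simp
  qed
qed

lemma frak_char:
  fixes Q p :: nat
  assumes Q0: "Q > 0"
  shows "frakn Q dvd p \<longleftrightarrow> (\<forall>q. prime q \<longrightarrow> q dvd Q \<longrightarrow> (q-1) dvd p*Q)"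
proof (cases "Q = 1")
  case True
  thus ?thesis by (auto simp: frakn_def)
next
  case False
  have "frakn Q dvd p \<longleftrightarrow> (\<forall>q\<in>prime_factors Q. (q - 1) div gcd (q - 1) Q dvd p)"
    using False by (simp add: frakn_def Lcm_dvd_iff)
  also have "\<dots> \<longleftrightarrow> (\<forall>q. prime q \<longrightarrow> q dvd Q \<longrightarrow> (q-1) dvd p*Q)"
    using Q0 by (auto simp: in_prime_factors_iff div_gcd_dvd_iff)
  finally show ?thesis .
qed

lemma frak_one:
  fixes Q :: nat
  assumes Q0: "Q > 0" and f: "frakn Q = 1"
  shows "\<forall>q. prime q \<longrightarrow> q dvd Q \<longrightarrow> (q-1) dvd Q"
  using frak_char[OF Q0, of 1] f by simp



lemma S4_dvd: "s \<in> {2,3,7,43::nat} \<Longrightarrow> s dvd 1806" by auto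

lemma sylv:
  assumes Q0: "Q > 0" "sqf Q"
    and h: "\<forall>q. prime q \<longrightarrow> q dvd Q \<longrightarrow> q \<le> B \<longrightarrow> (q-1) dvd Q"
  shows "prime r \<Longrightarrow> r dvd Q \<Longrightarrow> r \<le> B \<Longrightarrow> r \<in> {2,3,7,43}"
proof (induction r rule: less_induct)
  case (less r)
  have d: "(r-1) dvd Q" using h less.prems by blast
  have r2: "r \<ge> 2" using less.prems(1) prime_ge_2_nat by blast
  hence r1: "r - 1 > 0" by simp
  have "(r-1) dvd 1806"
  proof (rule sqf_nat_dvd[OF r1 sqf_dvd[OF Q0(2) d]])
    fix s assume s: "prime s" "s dvd r - 1"
    have "s \<le> r - 1" using s(2) r1 by (simp add: dvd_imp_le)
    hence "s < r" "s \<le> B" using r2 less.prems(3) by auto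
    moreover have "s dvd Q" using s(2) d dvd_trans by blast
    ultimately have "s \<in> {2,3,7,43}" using less.IH s(1) by blast
    thus "s dvd 1806" by (rule S4_dvd)
  qed
  thus ?case using prime_1806 less.prems(1) by blast
qed

lemma lemC:
  assumes p: "prime p" and Q0: "Q > 0" "sqf Q" and d: "(p-1) dvd Q"
    and all: "\<forall>s. prime s \<longrightarrow> s dvd Q \<longrightarrow> s \<in> {2,3,7,43}"
  shows "p \<in> {2,3,7,43}"
proof -
  have "p \<ge> 2" using p prime_ge_2_nat by blast
  hence r1: "p - 1 > 0" by simp
  have "(p-1) dvd 1806"
  proof (rule sqf_nat_dvd[OF r1 sqf_dvd[OF Q0(2) d]])
    fix s assume s: "prime s" "s dvd p - 1"
    hence "s dvd Q" using d dvd_trans by blast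
    thus "s dvd 1806" using all s(1) S4_dvd by blast
  qed
  thus ?thesis using prime_1806 p by blast
qed

lemma sqf_mult_iff:
  assumes p: "prime p"
  shows "sqf (p*Q) \<longleftrightarrow> sqf Q \<and> \<not> p dvd Q"
proof
  assume a: "sqf (p*Q)"
  have "\<not> p dvd Q"
  proof
    assume "p dvd Q"
    hence "p^2 dvd p*Q" by (simp add: power2_eq_square)
    thus False using a p unfolding sqf_def by blast
  qed
  thus "sqf Q \<and> \<not> p dvd Q" using sqf_dvd[OF a] by simp
next
  assume a: "sqf Q \<and> \<not> p dvd Q"
  show "sqf (p*Q)" unfolding sqf_def
  proof (intro allI impI notI)
    fix r assume r: "prime r" "r^2 dvd p*Q"
    show False
    proof (cases "r = p")
      case True
      hence "p*p dvd p*Q" using r by (simp add: power2_eq_square)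
      hence "p dvd Q" using p prime_gt_0_nat by simp
      thus False using a by blast
    next
      case False
      have "coprime (r^2) p" using False r(1) p by (simp add: primes_coprime)
      hence "r^2 dvd Q" using r(2) coprime_dvd_mult_right_iff by blast
      thus False using a r(1) unfolding sqf_def by blast
    qed
  qed
qed

lemma arith_key:
  fixes p t q :: nat
  assumes "q \<ge> 1"
  shows "[p*t*(q-1) + p*(t+1) = p] (mod q)"
proof -
  have "p*t*(q-1) + p*(t+1) = p*t*q + p" using assms
    by (cases q) (simp_all add: algebra_simps)
  moreover have "[p*t*q + p = 0 + p] (mod q)" by (rule cong_add) (simp_all add: cong_0_iff)
  ultimately show ?thesis by (metis add_0)
qed

lemma arith1:
  fixes p t q :: nat
  assumes q: "prime q" and nq: "\<not> q dvd p" and c: "[p*t*(q-1) = p] (mod q)"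
  shows "q dvd t + 1"
proof -
  have q1: "q \<ge> 1" using q prime_ge_1_nat by blast
  from arith_key[OF q1, of p t] c have "[p*t*(q-1) + p*(t+1) = p*t*(q-1) + 0] (mod q)"
    by (metis add.right_neutral cong_sym cong_trans)
  hence "[p*(t+1) = 0] (mod q)" using cong_add_lcancel_nat by blast
  hence "q dvd p*(t+1)" by (simp add: cong_0_iff)
  thus ?thesis using q nq prime_dvd_mult_iff by blast
qed

lemma arith2:
  fixes p t q :: nat
  assumes q: "prime q" and d: "q dvd t + 1"
  shows "[p*t*(q-1) = p] (mod q)"
proof -
  have q1: "q \<ge> 1" using q prime_ge_1_nat by blast
  have "q dvd p*(t+1)" using d by (rule dvd_mult)
  hence "[p*(t+1) = 0] (mod q)" by (simp only: cong_0_iff)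
  hence "[p*t*(q-1) + p*(t+1) = p*t*(q-1) + 0] (mod q)" by (rule cong_add[OF cong_refl])
  with arith_key[OF q1, of p t] show ?thesis by (metis add.right_neutral cong_sym cong_trans)
qed



lemma M1_iff:
  "n \<in> M1 p \<longleftrightarrow> n > 0 \<and> [S n n = p] (mod n) \<and> p dvd n \<and> \<not> p^2 dvd n"
  by (simp add: M1_def M_def cong_int_iff)

lemma S_n_cong:
  fixes n q :: nat
  assumes q: "prime q" and qn: "q dvd n" and n0: "n > 0"
  shows "[S n n = (n div q) * (if (q-1) dvd n then q - 1 else 0)] (mod q)"
  using cong_trans[OF S_mod_prime_mult[OF qn, of n] cong_scalar_left[OF S_prime_cong[OF q n0]]] .

lemma charM:
  fixes p Q n :: nat
  assumes p: "prime p" and n: "n = p*Q" and Q0: "Q > 0"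
  shows "n \<in> M1 p \<longleftrightarrow> sqf n \<and> \<not> (p-1) dvd Q \<and>
     (\<forall>q. prime q \<longrightarrow> q dvd Q \<longrightarrow> (q-1) dvd p*Q \<and> q dvd Q div q + 1)"
proof -
  have n0: "n > 0" using n Q0 p prime_gt_0_nat by simp
  have p2: "p \<ge> 2" using p prime_ge_2_nat by blast
  have cp: "coprime (p-1) p" using p2 coprime_diff_one_left_nat[of p] by linarith
  have pm1: "(p-1) dvd n \<longleftrightarrow> (p-1) dvd Q"
    using n cp by (simp add: coprime_dvd_mult_right_iff)
  define c where "c = (\<lambda>q::nat. if (q-1) dvd n then q - 1 else 0)"
  have key: "[S n n = (n div q) * c q] (mod q)" if "prime q" "q dvd n" for q
    using S_n_cong[OF that n0] unfolding c_def .
  show ?thesis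
  proof
    assume "n \<in> M1 p"
    hence A: "[S n n = p] (mod n)" and np2: "\<not> p^2 dvd n" using M1_iff by blast+
    have B: "[(n div q) * c q = p] (mod q)" if "prime q" "q dvd n" for q
      using cong_trans[OF cong_sym[OF key[OF that]] cong_dvd_modulus_nat[OF A that(2)]] .
    have X: "q = p" if "prime q" "q dvd n" "q dvd (n div q) * c q" for q
    proof -
      have "[p = 0] (mod q)" using B[OF that(1,2)] that(3)
        by (metis cong_0_iff cong_sym cong_trans)
      hence "q dvd p" by (simp add: cong_0_iff)
      thus ?thesis using p that(1) by (metis prime_nat_iff not_prime_1)
    qed
    have sq: "sqf n" unfolding sqf_def
    proof (intro allI impI notI)
      fix q assume q: "prime q" "q^2 dvd n"
      hence qn: "q dvd n" by (meson dvd_power dvd_trans prime_gt_0_nat zero_less_numeral)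
      from q obtain m where "n = q^2*m" by blast
      hence "n div q = q*m" using q(1) prime_gt_0_nat by (simp add: power2_eq_square)
      hence "q dvd (n div q) * c q" by simp
      hence "q = p" using X q(1) qn by blast
      thus False using q(2) np2 by simp
    qed
    hence npQ: "\<not> p dvd Q" using sqf_mult_iff[OF p] n by simp
    have condQ: "(q-1) dvd p*Q \<and> q dvd Q div q + 1" if q: "prime q" "q dvd Q" for q
    proof -
      have qn: "q dvd n" using q(2) n by simp
      have qp: "q \<noteq> p" using q(2) npQ by blast
      have dv: "(q-1) dvd n"
      proof (rule ccontr)
        assume "\<not> (q-1) dvd n"
        hence "c q = 0" by (simp add: c_def)
        hence "q = p" using X[OF q(1) qn] by simp
        thus False using qp by simp
      qed
      hence cq: "c q = q - 1" by (simp add: c_def)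
      have "n div q = p * (Q div q)" using q(2) n by (metis dvd_div_mult mult.commute q(1) div_mult_swap)
      hence "[p*(Q div q)*(q-1) = p] (mod q)" using B[OF q(1) qn] cq by simp
      moreover have "\<not> q dvd p" using qp p q(1) by (metis prime_nat_iff not_prime_1)
      ultimately have "q dvd Q div q + 1" using arith1 q(1) by blast
      thus ?thesis using dv n by simp
    qed
    have "\<not> (p-1) dvd Q"
    proof
      assume "(p-1) dvd Q"
      hence cp1: "c p = p - 1" using pm1 by (simp add: c_def)
      have pn: "p dvd n" using n by simp
      have "[Q * (p-1) = p] (mod p)" using B[OF p pn] cp1 n p prime_gt_0_nat by simp
      hence "[Q * (p-1) = 0] (mod p)" by (metis cong_0_iff cong_trans dvd_refl)
      hence "p dvd Q * (p-1)" by (simp add: cong_0_iff)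
      hence "p dvd (p-1)" using npQ p prime_dvd_mult_iff by blast
      moreover have "p - 1 > 0" "p - 1 < p" using p2 by auto
      ultimately show False using nat_dvd_not_less by blast
    qed
    thus "sqf n \<and> \<not> (p-1) dvd Q \<and> (\<forall>q. prime q \<longrightarrow> q dvd Q \<longrightarrow> (q-1) dvd p*Q \<and> q dvd Q div q + 1)"
      using sq condQ by blast
  next
    assume h: "sqf n \<and> \<not> (p-1) dvd Q \<and> (\<forall>q. prime q \<longrightarrow> q dvd Q \<longrightarrow> (q-1) dvd p*Q \<and> q dvd Q div q + 1)"
    hence sq: "sqf n" and npm: "\<not> (p-1) dvd Q"
      and cond: "\<And>q. prime q \<Longrightarrow> q dvd Q \<Longrightarrow> (q-1) dvd p*Q \<and> q dvd Q div q + 1" by blast+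
    have npQ: "\<not> p dvd Q" using sqf_mult_iff[OF p] n sq by simp
    have each: "[S n n = p] (mod q)" if q: "prime q" "q dvd n" for q
    proof (cases "q = p")
      case True
      have "c p = 0" using npm pm1 by (simp add: c_def)
      hence "[S n n = 0] (mod p)" using key[OF p] n by simp
      moreover have "[p = 0] (mod p)" by (simp add: cong_0_iff)
      ultimately show ?thesis using True by (metis cong_sym cong_trans)
    next
      case False
      hence qQ: "q dvd Q" using q n p by (metis prime_dvd_mult_iff prime_nat_iff not_prime_1)
      have cq: "c q = q - 1" using cond[OF q(1) qQ] n by (simp add: c_def)
      have "n div q = p * (Q div q)" using qQ n by (metis div_mult_swap)
      hence "[S n n = p*(Q div q)*(q-1)] (mod q)" using key[OF q] cq by simp
      moreover have "[p*(Q div q)*(q-1) = p] (mod q)" using arith2 q(1) cond[OF q(1) qQ] by blast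
      ultimately show ?thesis by (rule cong_trans)
    qed
    have "int n dvd int (S n n) - int p"
    proof (rule sqf_int_dvd[OF n0 sq])
      fix q assume "prime q" "q dvd n"
      from each[OF this] show "int q dvd int (S n n) - int p"
        by (metis cong_iff_dvd_diff cong_int_iff cong_sym)
    qed
    hence "[S n n = p] (mod n)" by (metis cong_iff_dvd_diff cong_int_iff cong_sym)
    moreover have "\<not> p^2 dvd n" using sq p unfolding sqf_def by blast
    ultimately show "n \<in> M1 p" using M1_iff n0 n by simp
  qed
qed



theorem mainTheorem18:
  fixes p n :: nat
  assumes "prime p" and "p \<notin> {2, 3, 7, 43}" and "n > 0" and "p dvd n"
  shows "n \<in> M1 p \<longleftrightarrow>
    (n div p \<in> W \<and> frakn (n div p) dvd p \<and> \<not> (frakn (n div p) - 1) dvd (n div p))"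
proof -
  note p = assms(1)
  define Q where "Q = n div p"
  have n: "n = p*Q" using assms(4) unfolding Q_def by simp
  have Q0: "Q > 0" using n assms(3) by (cases Q) auto
  have p2: "p \<ge> 2" using p prime_ge_2_nat by blast
  have fr: "frakn Q = 1 \<or> frakn Q = p" if "frakn Q dvd p" using that p prime_nat_iff by blast
  have "n \<in> M1 p \<longleftrightarrow> (Q \<in> W \<and> frakn Q dvd p \<and> \<not> (frakn Q - 1) dvd Q)"
  proof
    assume "n \<in> M1 p"
    hence h: "sqf n" "\<not> (p-1) dvd Q"
      "\<forall>q. prime q \<longrightarrow> q dvd Q \<longrightarrow> (q-1) dvd p*Q \<and> q dvd Q div q + 1"
      using charM[OF p n Q0] by blast+
    have sQ: "sqf Q" using sqf_mult_iff[OF p] h(1) n by simp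
    have W: "Q \<in> W" using W_char[OF Q0] sQ h(3) by blast
    have F: "frakn Q dvd p" using frak_char[OF Q0] h(3) by blast
    have "\<not> (frakn Q - 1) dvd Q"
      using fr[OF F] h(2) Q0 by auto
    thus "Q \<in> W \<and> frakn Q dvd p \<and> \<not> (frakn Q - 1) dvd Q" using W F by blast
  next
    assume h: "Q \<in> W \<and> frakn Q dvd p \<and> \<not> (frakn Q - 1) dvd Q"
    have sQ: "sqf Q" and c1: "\<forall>q. prime q \<longrightarrow> q dvd Q \<longrightarrow> q dvd Q div q + 1"
      using W_char[OF Q0] h by blast+
    have c2: "\<forall>q. prime q \<longrightarrow> q dvd Q \<longrightarrow> (q-1) dvd p*Q" using frak_char[OF Q0] h by blast
    have npQ: "\<not> p dvd Q"
    proof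
      assume pQ: "p dvd Q"
      have hh: "\<forall>q. prime q \<longrightarrow> q dvd Q \<longrightarrow> q \<le> p \<longrightarrow> (q-1) dvd Q"
      proof (intro allI impI)
        fix q assume q: "prime q" "q dvd Q" "q \<le> p"
        have "q - 1 < p" "q - 1 > 0" using q(3) q(1) prime_ge_2_nat[of q] by auto
        hence "\<not> p dvd (q-1)" using nat_dvd_not_less by blast
        hence "coprime p (q-1)" using p prime_imp_coprime by blast
        hence "coprime (q-1) p" by (simp add: coprime_commute)
        thus "(q-1) dvd Q" using c2 q coprime_dvd_mult_right_iff by blast
      qed
      have "p \<in> {2,3,7,43}" using sylv[OF Q0 sQ hh p pQ] by simp
      thus False using assms(2) by blast
    qed
    have npm: "\<not> (p-1) dvd Q"
    proof
      assume d: "(p-1) dvd Q"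
      have "frakn Q = 1 \<or> frakn Q = p" using fr h by blast
      thus False
      proof
        assume f1: "frakn Q = 1"
        have hh: "\<forall>q. prime q \<longrightarrow> q dvd Q \<longrightarrow> q \<le> Q \<longrightarrow> (q-1) dvd Q"
          using frak_one[OF Q0 f1] by blast
        have all: "\<forall>s. prime s \<longrightarrow> s dvd Q \<longrightarrow> s \<in> {2,3,7,43}"
          using sylv[OF Q0 sQ hh] Q0 dvd_imp_le by blast
        have "p \<in> {2,3,7,43}" using lemC[OF p Q0 sQ d all] .
        thus False using assms(2) by blast
      next
        assume "frakn Q = p"
        thus False using h d by simp
      qed
    qed
    have "sqf n" using sqf_mult_iff[OF p] sQ npQ n by simp
    thus "n \<in> M1 p" using charM[OF p n Q0] npm c1 c2 by blast
  qed
  thus ?thesis unfolding Q_def .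
qed

end
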